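(* Let $\mathcal{I}$ be a $\sigma$-ideal on $\mathbb{R}$ satisfying the standing assumptions, and let $L\subseteq\mathbb{R}$ be an $\mathcal{I}$-Luzin set. Then $L+\mathbb{Q}=\{l+q: l\in L, q\in\mathbb{Q}\}$ is a strong $\mathcal{I}$-Luzin set.
   Context: Standing assumptions on $\mathcal{I}$: $\mathcal{I}$ is a $\sigma$-ideal of subsets of $\mathbb{R}$ such that $\mathbb{R}\notin\mathcal{I}$; $x+I\in\mathcal{I}$ and $xI\in\mathcal{I}$ for all $x\in\mathbb{R}$, $I\in\mathcal{I}$; every member of $\mathcal{I}$ is contained in a Borel member of $\mathcal{I}$; and for all Borel $A,B\notin\mathcal{I}$ the set $A-B$ has nonempty interior. A set $L\subseteq\mathbb{R}$ is $\mathcal{I}$-Luzin if $|L|=\mathfrak{c}$ and $L\cap I$ is countable for every $I\in\mathcal{I}$; it is strong $\mathcal{I}$-Luzin if moreover $L\cap B$ is uncountable for every Borel set $B\notin\mathcal{I}$. *)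

theory Defs
  imports "HOL-Analysis.Analysis" "HOL-Library.Equipollence"
begin

definition sigma_ideal :: "real set set \<Rightarrow> bool" where
  "sigma_ideal \<I> \<longleftrightarrow>
     {} \<in> \<I> \<and>
     (\<forall>A B. A \<in> \<I> \<and> B \<subseteq> A \<longrightarrow> B \<in> \<I>) \<and>
     (\<forall>F::nat \<Rightarrow> real set. (\<forall>n. F n \<in> \<I>) \<longrightarrow> (\<Union>n. F n) \<in> \<I>)"

definition standing_assumptions :: "real set set \<Rightarrow> bool" where
  "standing_assumptions \<I> \<longleftrightarrow>
     sigma_ideal \<I> \<and>
     (UNIV :: real set) \<notin> \<I> \<and>
     (\<forall>x. \<forall>I\<in>\<I>. (\<lambda>y. x + y) ` I \<in> \<I> \<and> (\<lambda>y. x * y) ` I \<in> \<I>) \<and>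
     (\<forall>I\<in>\<I>. \<exists>B\<in>\<I>. B \<in> sets borel \<and> I \<subseteq> B) \<and>
     (\<forall>A B. A \<in> sets borel \<and> B \<in> sets borel \<and> A \<notin> \<I> \<and> B \<notin> \<I> \<longrightarrow>
        interior {a - b | a b. a \<in> A \<and> b \<in> B} \<noteq> {})"

definition I_Luzin :: "real set set \<Rightarrow> real set \<Rightarrow> bool" where
  "I_Luzin \<I> L \<longleftrightarrow> L \<approx> (UNIV :: real set) \<and> (\<forall>I\<in>\<I>. countable (L \<inter> I))"

definition strong_I_Luzin :: "real set set \<Rightarrow> real set \<Rightarrow> bool" where
  "strong_I_Luzin \<I> L \<longleftrightarrow> I_Luzin \<I> L \<and>
     (\<forall>B. B \<in> sets borel \<and> B \<notin> \<I> \<longrightarrow> uncountable (L \<inter> B))"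

end

theory Submission
  imports Defs
begin

lemma countable_in_ideal:
  assumes sa: "standing_assumptions \<I>" and E: "countable E"
  shows "E \<in> \<I>"
proof -
  have si: "sigma_ideal \<I>" using sa by (simp add: standing_assumptions_def)
  have z: "{0::real} \<in> \<I>"
  proof (rule ccontr)
    assume "{0::real} \<notin> \<I>"
    moreover have "{0::real} \<in> sets borel" by simp
    ultimately have "interior {a - b | a b. a \<in> {0::real} \<and> b \<in> {0}} \<noteq> {}"
      using sa unfolding standing_assumptions_def by blast
    moreover have "{a - b | a b. a \<in> {0::real} \<and> b \<in> {0}} = {0}" by auto
    ultimately show False by simp
  qed
  have sing: "{x} \<in> \<I>" for x :: real
  proof -
    have "(\<lambda>y. x + y) ` {0} \<in> \<I>" using sa z unfolding standing_assumptions_def by blast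
    thus ?thesis by simp
  qed
  show ?thesis
  proof (cases "E = {}")
    case True thus ?thesis using si by (simp add: sigma_ideal_def)
  next
    case False
    have un: "\<And>F::nat \<Rightarrow> real set. (\<forall>n. F n \<in> \<I>) \<Longrightarrow> (\<Union>n. F n) \<in> \<I>"
      using si unfolding sigma_ideal_def by blast
    have "(\<Union>n. {from_nat_into E n}) \<in> \<I>" by (rule un) (simp add: sing)
    moreover have "(\<Union>n. {from_nat_into E n}) = E"
      using range_from_nat_into[OF False E] by auto
    ultimately show ?thesis by simp
  qed
qed

theorem mainTheorem2:
  fixes \<I> :: "real set set" and L :: "real set"
  assumes "standing_assumptions \<I>"
    and "I_Luzin \<I> L"
  shows "strong_I_Luzin \<I> {l + q | l q. l \<in> L \<and> q \<in> \<rat>}"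
proof -
  define M where "M = {l + q | l q. l \<in> L \<and> q \<in> \<rat>}"
  have sa: "standing_assumptions \<I>" by fact
  have si: "sigma_ideal \<I>" using sa by (simp add: standing_assumptions_def)
  have sub: "\<And>X Y. X \<in> \<I> \<Longrightarrow> Y \<subseteq> X \<Longrightarrow> Y \<in> \<I>" using si unfolding sigma_ideal_def by blast
  have un: "\<And>F::nat \<Rightarrow> real set. (\<And>n. F n \<in> \<I>) \<Longrightarrow> (\<Union>n. F n) \<in> \<I>" using si unfolding sigma_ideal_def by blast
  have st: "\<And>A B. A \<in> sets borel \<Longrightarrow> B \<in> sets borel \<Longrightarrow> A \<notin> \<I> \<Longrightarrow> B \<notin> \<I> \<Longrightarrow>
        interior {a - b | a b. a \<in> A \<and> b \<in> B} \<noteq> {}" using sa unfolding standing_assumptions_def by blast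
  have LU: "L \<approx> (UNIV::real set)" and Lc: "\<forall>I\<in>\<I>. countable (L \<inter> I)"
    using assms(2) by (auto simp: I_Luzin_def)
  have LM: "L \<subseteq> M"
  proof
    fix x assume "x \<in> L"
    moreover have "x = x + 0" by simp
    ultimately show "x \<in> M" unfolding M_def using Rats_0 by blast
  qed
  have c1: "M \<approx> (UNIV::real set)"
  proof (rule lepoll_antisym)
    show "M \<lesssim> (UNIV::real set)" by (rule subset_imp_lepoll) simp
    have "(UNIV::real set) \<lesssim> L" using LU eqpoll_sym eqpoll_imp_lepoll by blast
    also have "L \<lesssim> M" using LM by (rule subset_imp_lepoll)
    finally show "(UNIV::real set) \<lesssim> M" .
  qed
  have c2: "countable (M \<inter> I)" if I: "I \<in> \<I>" for I
  proof -
    have "M \<inter> I \<subseteq> (\<Union>q\<in>\<rat>. (\<lambda>x. x + q) ` (L \<inter> ((\<lambda>y. -q + y) ` I)))"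
    proof
      fix m assume "m \<in> M \<inter> I"
      then obtain l q where "m = l + q" "l \<in> L" "q \<in> \<rat>" "m \<in> I" unfolding M_def by blast
      moreover have "l = -q + m" using \<open>m = l + q\<close> by simp
      ultimately show "m \<in> (\<Union>q\<in>\<rat>. (\<lambda>x. x + q) ` (L \<inter> ((\<lambda>y. -q + y) ` I)))"
        by blast
    qed
    moreover have "countable (\<Union>q\<in>\<rat>. (\<lambda>x. x + q) ` (L \<inter> ((\<lambda>y. -q + y) ` I)))"
    proof (rule countable_UN[OF countable_rat])
      fix q :: real
      have "(\<lambda>y. -q + y) ` I \<in> \<I>" using sa I unfolding standing_assumptions_def by blast
      thus "countable ((\<lambda>x. x + q) ` (L \<inter> ((\<lambda>y. -q + y) ` I)))" using Lc by blast
    qed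
    ultimately show ?thesis by (rule countable_subset)
  qed
  have c3: "uncountable (M \<inter> B)" if B: "B \<in> sets borel" "B \<notin> \<I>" for B
  proof
    assume E: "countable (M \<inter> B)"
    define A where "A = B - M"
    have Eb: "M \<inter> B \<in> sets borel"
      by (rule sets.countable[OF _ E]) (simp add: closed_singleton)
    have "B - (M \<inter> B) = A" unfolding A_def by blast
    hence Ab: "A \<in> sets borel" using sets.Diff[OF B(1) Eb] by simp
    have EI: "M \<inter> B \<in> \<I>" using countable_in_ideal[OF sa E] .
    have AI: "A \<notin> \<I>"
    proof
      assume "A \<in> \<I>"
      define F where "F = (\<lambda>n::nat. if n = 0 then A else M \<inter> B)"
      have "(\<Union>n. F n) \<in> \<I>" using \<open>A \<in> \<I>\<close> EI by (intro un) (simp add: F_def)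
      moreover have "B \<subseteq> (\<Union>n. F n)" unfolding F_def A_def
        by (auto intro: exI[of _ 0] exI[of _ 1])
      ultimately show False using sub B by blast
    qed
    define AQ where "AQ = (\<Union>q\<in>\<rat>. (\<lambda>y. y - q) -` A)"
    have AQb: "AQ \<in> sets borel" unfolding AQ_def
    proof (rule sets.countable_UN''[OF countable_rat])
      fix q :: real
      have "(\<lambda>y. y - q) \<in> borel_measurable borel" by simp
      hence "(\<lambda>y. y - q) -` A \<inter> space borel \<in> sets borel" using Ab by (rule measurable_sets)
      thus "(\<lambda>y. y - q) -` A \<in> sets borel" by simp
    qed
    have AAQ: "A \<subseteq> AQ" unfolding AQ_def
    proof
      fix x assume "x \<in> A"
      hence "x \<in> (\<lambda>y. y - 0) -` A" by simp
      thus "x \<in> (\<Union>q\<in>\<rat>. (\<lambda>y. y - q) -` A)" by (rule UN_I[OF Rats_0])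
    qed
    have AQI: "AQ \<notin> \<I>" using AI AAQ sub by blast
    define D where "D = UNIV - AQ"
    have Db: "D \<in> sets borel" unfolding D_def using AQb by auto
    have MD: "M \<subseteq> D"
    proof
      fix m assume m: "m \<in> M"
      have "m \<notin> AQ"
      proof
        assume "m \<in> AQ"
        then obtain q where q: "q \<in> \<rat>" "m - q \<in> A" unfolding AQ_def by auto
        from m obtain l r where "m = l + r" "l \<in> L" "r \<in> \<rat>" unfolding M_def by blast
        hence "m - q = l + (r - q)" "r - q \<in> \<rat>" using q by auto
        hence "m - q \<in> M" unfolding M_def using \<open>l \<in> L\<close> by blast
        thus False using q unfolding A_def by auto
      qed
      thus "m \<in> D" unfolding D_def by simp
    qed
    have DI: "D \<notin> \<I>"
    proof
      assume "D \<in> \<I>"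
      hence "countable (L \<inter> D)" using Lc by blast
      moreover have "L \<inter> D = L" using LM MD by auto
      ultimately have "countable L" by simp
      hence "countable (UNIV::real set)" using LU
        by (meson countable_lepoll eqpoll_imp_lepoll eqpoll_sym)
      thus False using uncountable_UNIV_real by simp
    qed
    have "interior {a - b | a b. a \<in> AQ \<and> b \<in> D} \<noteq> {}"
      using st AQb Db AQI DI by blast
    then obtain x where "x \<in> interior {a - b | a b. a \<in> AQ \<and> b \<in> D}" by blast
    then obtain e where e: "e > 0" "ball x e \<subseteq> {a - b | a b. a \<in> AQ \<and> b \<in> D}"
      by (meson mem_interior)
    obtain r where r: "r \<in> \<rat>" "x < r" "r < x + e" using Rats_dense_in_real[of x "x + e"] e by auto
    have "r \<in> ball x e" using r by (simp add: dist_real_def)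
    then obtain a b where ab: "r = a - b" "a \<in> AQ" "b \<in> D" using e by blast
    then obtain q where q: "q \<in> \<rat>" "a - q \<in> A" unfolding AQ_def by auto
    have "b - (q - r) = a - q" using ab by simp
    moreover have "q - r \<in> \<rat>" using q r by auto
    ultimately have "b \<in> (\<lambda>y. y - (q - r)) -` A" using q by (metis vimage_eq)
    hence "b \<in> AQ" unfolding AQ_def by (rule UN_I[OF \<open>q - r \<in> \<rat>\<close>])
    thus False using ab D_def by simp
  qed
  show ?thesis unfolding strong_I_Luzin_def I_Luzin_def M_def[symmetric]
    using c1 c2 c3 by blast
qed

end
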